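(* There exists a function $f:\mathbb{R}^{\mathbb{Z}_<}\to\mathbb{R}^{\mathbb{Z}_<}$ that satisfies $\mathrm{ED}_{\mathrm{CLASS}}$ but does not satisfy $\mathrm{ED}$.
   Context: $\mathbb{R}^{\mathbb{Z}_<}$ is the set of formal series $\sum_{i\ge -k}a_i\epsilon^i$ ($k\in\mathbb{N}\cup\{0\}$, $a_i\in\mathbb{R}$), with coefficientwise addition, Cauchy-product multiplication and lexicographic order; $|\cdot|$ is the associated absolute value. A function $f$ satisfies $\mathrm{ED}_{\mathrm{CLASS}}$ iff at every point $\mathbf{a}$ of its domain, for every $n\in\mathbb{N}$ there is $m\in\mathbb{N}$ such that $|f(\mathbf{x})-f(\mathbf{a})|<1/n$ whenever $|\mathbf{x}-\mathbf{a}|<1/m$. It satisfies $\mathrm{ED}$ iff at every point $\mathbf{c}$, for every $\iota_1\in\mathbb{R}^{\mathbb{Z}_<}$ with $\iota_1>0$ there is $\iota_2\in\mathbb{R}^{\mathbb{Z}_<}$ with $\iota_2>0$ such that $|f(\mathbf{x})-f(\mathbf{c})|<\iota_1$ whenever $|\mathbf{x}-\mathbf{c}|<\iota_2$. *)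

theory Defs
  imports "HOL-Computational_Algebra.Formal_Laurent_Series"
begin

text \<open>The field R^{Z_<} of formal Laurent series sum_{i >= -k} a_i eps^i over the reals
  is the library type real fls (finitely many negative-index terms).\<close>

definition lpos :: "real fls \<Rightarrow> bool" where
  "lpos x \<longleftrightarrow> x \<noteq> 0 \<and> fls_nth x (fls_subdegree x) > 0"

definition lless :: "real fls \<Rightarrow> real fls \<Rightarrow> bool" where
  "lless x y \<longleftrightarrow> lpos (y - x)"

definition labs :: "real fls \<Rightarrow> real fls" where
  "labs x = (if lpos x \<or> x = 0 then x else - x)"

definition ED_CLASS :: "(real fls \<Rightarrow> real fls) \<Rightarrow> bool" where
  "ED_CLASS f \<longleftrightarrow>
     (\<forall>a. \<forall>n::nat. n \<ge> 1 \<longrightarrow> (\<exists>m::nat. m \<ge> 1 \<and>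
        (\<forall>x. lless (labs (x - a)) (1 / of_nat m) \<longrightarrow>
              lless (labs (f x - f a)) (1 / of_nat n))))"

definition ED :: "(real fls \<Rightarrow> real fls) \<Rightarrow> bool" where
  "ED f \<longleftrightarrow>
     (\<forall>c. \<forall>\<iota>1. lpos \<iota>1 \<longrightarrow> (\<exists>\<iota>2. lpos \<iota>2 \<and>
        (\<forall>x. lless (labs (x - c)) \<iota>2 \<longrightarrow> lless (labs (f x - f c)) \<iota>1)))"

end

theory Submission
  imports Defs
begin

lemma subdeg_X: "fls_subdegree (fls_X :: real fls) = 1"
  by (rule fls_subdegree_eqI) auto

lemma lpos_X: "lpos fls_X"
  unfolding lpos_def using subdeg_X by simp

lemma labs_X: "labs fls_X = fls_X"
  using lpos_X labs_def by simp

lemma labs_mX: "labs (- fls_X) = fls_X"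
proof -
  have "fls_subdegree (- (fls_X :: real fls)) = 1"
    by (rule fls_subdegree_eqI) auto
  hence "\<not> lpos (- fls_X)" unfolding lpos_def by simp
  thus ?thesis unfolding labs_def by simp
qed

lemma inv_n: "(1 / of_nat n :: real fls) = fls_const (1 / real n)"
  by (simp add: fls_of_nat fls_const_divide_const[symmetric])

lemma lpos_invn: "n \<ge> 1 \<Longrightarrow> lpos (1 / of_nat n :: real fls)"
proof -
  assume n: "n \<ge> 1"
  have s: "fls_subdegree (fls_const (1 / real n)) = 0"
    by (rule fls_subdegree_eqI) (use n in auto)
  show ?thesis unfolding inv_n lpos_def using s n
    by (auto simp: fls_const_nonzero)
qed

lemma lpos_invn_X: "n \<ge> 1 \<Longrightarrow> lpos (1 / of_nat n - fls_X :: real fls)"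
proof -
  assume n: "n \<ge> 1"
  have s: "fls_subdegree (fls_const (1 / real n) - fls_X) = 0"
    by (rule fls_subdegree_eqI) (use n in auto)
  have nz: "fls_const (1 / real n) - fls_X \<noteq> 0"
  proof
    assume "fls_const (1 / real n) - fls_X = 0"
    hence "fls_nth (fls_const (1 / real n) - fls_X) 0 = 0" by simp
    thus False using n by simp
  qed
  show ?thesis unfolding inv_n lpos_def using s n nz by auto
qed

definition ff :: "real fls \<Rightarrow> real fls" where
  "ff x = (if x = 0 then fls_X else 0)"

lemma ff_diff: "labs (ff x - ff a) = 0 \<or> labs (ff x - ff a) = fls_X"
  unfolding ff_def using labs_X labs_mX lpos_X by (auto simp: labs_def)

lemma ff_class: "ED_CLASS ff"
  unfolding ED_CLASS_def
proof (intro allI impI)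
  fix a and n :: nat assume n: "n \<ge> 1"
  show "\<exists>m::nat. m \<ge> 1 \<and> (\<forall>x. lless (labs (x - a)) (1 / of_nat m) \<longrightarrow>
              lless (labs (ff x - ff a)) (1 / of_nat n))"
  proof (intro exI[of _ 1] conjI allI impI)
    fix x
    show "lless (labs (ff x - ff a)) (1 / of_nat n)"
      using ff_diff[of x a] lpos_invn[OF n] lpos_invn_X[OF n]
      unfolding lless_def by auto
  qed simp
qed

lemma ff_not: "\<not> ED ff"
  unfolding ED_def
proof
  assume H: "\<forall>c \<iota>1. lpos \<iota>1 \<longrightarrow> (\<exists>\<iota>2. lpos \<iota>2 \<and>
        (\<forall>x. lless (labs (x - c)) \<iota>2 \<longrightarrow> lless (labs (ff x - ff c)) \<iota>1))"
  then obtain e where e: "lpos e"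
    and E: "\<forall>x. lless (labs (x - 0)) e \<longrightarrow> lless (labs (ff x - ff 0)) fls_X"
    using lpos_X by blast
  define x where "x = fls_const (1/2) * e"
  have enz: "e \<noteq> 0" using e lpos_def by auto
  have xe: "e - x = x" unfolding x_def
  proof (rule fls_eqI)
    fix n show "fls_nth (e - fls_const (1/2) * e) n = fls_nth (fls_const (1/2) * e) n" by simp
  qed
  have xnz: "x \<noteq> 0"
  proof
    assume "x = 0" hence "e = 0" using xe by simp
    thus False using enz by simp
  qed
  have sx: "fls_subdegree x = fls_subdegree e"
    by (rule fls_subdegree_eqI) (use e enz in \<open>auto simp: x_def lpos_def\<close>)
  have lx: "lpos x" unfolding lpos_def using xnz sx e
    by (simp add: x_def lpos_def)
  have "lless (labs (x - 0)) e" using lx xe unfolding lless_def labs_def by simp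
  hence "lless (labs (ff x - ff 0)) fls_X" using E by blast
  moreover have "ff x - ff 0 = - fls_X" using xnz unfolding ff_def by simp
  ultimately show False using labs_mX unfolding lless_def lpos_def by simp
qed

theorem mainTheorem5:
  shows "\<exists>f :: real fls \<Rightarrow> real fls. ED_CLASS f \<and> \<not> ED f"
  using ff_class ff_not by blast

end
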